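(* Let $n$ be a positive integer and let $F_n=K_1\vee P_n$ be the fan of order $n+1$. Then $\gamma_{sR}(F_n)=2$ if $n\in\{2,4\}$, and $\gamma_{sR}(F_n)=1$ if $n\notin\{2,4\}$.
   Context: $P_n$ denotes the path on $n$ vertices and $K_1$ the one-vertex graph. The join $G_1\vee G_2$ of two graphs has vertex set $V(G_1)\cup V(G_2)$ (disjoint union) and edge set $E(G_1)\cup E(G_2)\cup\{uv: u\in V(G_1), v\in V(G_2)\}$. For a graph $G=(V,E)$ and $x\in V$, $N_G[x]=\{x\}\cup\{y: xy\in E\}$. A signed Roman dominating function (SRDF) on $G$ is a function $f:V\to\{-1,1,2\}$ such that (a) $\sum_{y\in N_G[x]}f(y)\geq 1$ for every $x\in V$, and (b) every vertex $x$ with $f(x)=-1$ is adjacent to at least one vertex $y$ with $f(y)=2$. The weight of $f$ is $\sum_{x\in V}f(x)$, and $\gamma_{sR}(G)$ is the minimum weight of an SRDF on $G$. *)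

theory Defs
  imports Main
begin

definition closed_nbhd :: "'a set \<Rightarrow> ('a \<Rightarrow> 'a \<Rightarrow> bool) \<Rightarrow> 'a \<Rightarrow> 'a set" where
  "closed_nbhd V E x = insert x {y \<in> V. E x y}"

definition is_SRDF :: "'a set \<Rightarrow> ('a \<Rightarrow> 'a \<Rightarrow> bool) \<Rightarrow> ('a \<Rightarrow> int) \<Rightarrow> bool" where
  "is_SRDF V E f \<longleftrightarrow>
     (\<forall>x\<in>V. f x \<in> {-1, 1, 2}) \<and>
     (\<forall>x. x \<notin> V \<longrightarrow> f x = 0) \<and>
     (\<forall>x\<in>V. (\<Sum>y\<in>closed_nbhd V E x. f y) \<ge> 1) \<and>
     (\<forall>x\<in>V. f x = -1 \<longrightarrow> (\<exists>y\<in>V. E x y \<and> f y = 2))"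

definition weight :: "'a set \<Rightarrow> ('a \<Rightarrow> int) \<Rightarrow> int" where
  "weight V f = (\<Sum>x\<in>V. f x)"

definition gamma_sR :: "'a set \<Rightarrow> ('a \<Rightarrow> 'a \<Rightarrow> bool) \<Rightarrow> int" where
  "gamma_sR V E = Min {weight V f | f. is_SRDF V E f}"

text \<open>The fan F_n = K_1 join P_n: vertex 0 is the K_1 vertex, vertices 1..n form the path
1 - 2 - ... - n; vertex 0 is adjacent to all path vertices.\<close>
definition fan_V :: "nat \<Rightarrow> nat set" where
  "fan_V n = {0..n}"

definition fan_E :: "nat \<Rightarrow> nat \<Rightarrow> nat \<Rightarrow> bool" where
  "fan_E n u v \<longleftrightarrow> u \<in> fan_V n \<and> v \<in> fan_V n \<and> u \<noteq> v \<and>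
     (u = 0 \<or> v = 0 \<or> u = v + 1 \<or> v = u + 1)"

end

theory Submission
  imports Defs
begin

lemma nbhd0: "closed_nbhd (fan_V n) (fan_E n) 0 = fan_V n"
  unfolding closed_nbhd_def fan_E_def fan_V_def by auto

lemma nbhd_i:
  assumes "1 \<le> i" "i \<le> n"
  shows "closed_nbhd (fan_V n) (fan_E n) i =
    {0, i} \<union> (if 2 \<le> i then {i-1} else {}) \<union> (if i < n then {i+1} else {})"
  using assms unfolding closed_nbhd_def fan_E_def fan_V_def
  by (auto split: if_splits)

lemma nb_sum:
  assumes "1 \<le> i" "i \<le> n"
  shows "(\<Sum>y\<in>closed_nbhd (fan_V n) (fan_E n) i. (f y::int)) =
     f 0 + f i + (if 2 \<le> i then f (i-1) else 0) + (if i < n then f (i+1) else 0)"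
  using assms by (auto simp: nbhd_i)

lemma sum_V: "(\<Sum>y\<in>fan_V n. (f y::int)) = f 0 + (\<Sum>i=1..n. f i)"
proof -
  have "fan_V n = insert 0 {1..n}" unfolding fan_V_def by auto
  then show ?thesis by simp
qed

lemma SRDF_intro:
  assumes v0: "f 0 \<in> {-1,1,2}"
    and vi: "\<forall>i\<in>{1..n}. f i \<in> {-1,1,2}"
    and out: "\<forall>i>n. f i = 0"
    and s0: "f 0 + (\<Sum>i=1..n. f i) \<ge> 1"
    and win: "\<forall>i\<in>{1..n}. f 0 + f i + (if 2 \<le> i then f (i-1) else 0) + (if i < n then f (i+1) else 0) \<ge> 1"
    and m0: "f 0 = -1 \<longrightarrow> (\<exists>y\<in>{1..n}. f y = 2)"
    and mi: "\<forall>i\<in>{1..n}. f i = -1 \<longrightarrow> (f 0 = 2 \<or> (2 \<le> i \<and> f (i-1) = 2) \<or> (i < n \<and> f (i+1) = 2))"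
  shows "is_SRDF (fan_V n) (fan_E n) f"
  unfolding is_SRDF_def
proof (intro conjI ballI allI impI)
  fix x assume "x \<in> fan_V n"
  then show "f x \<in> {-1,1,2}" using v0 vi unfolding fan_V_def by (cases "x = 0") auto
next
  fix x assume "x \<notin> fan_V n" then show "f x = 0" using out unfolding fan_V_def by auto
next
  fix x assume x: "x \<in> fan_V n"
  show "(\<Sum>y\<in>closed_nbhd (fan_V n) (fan_E n) x. f y) \<ge> 1"
  proof (cases "x = 0")
    case True then show ?thesis using s0 by (simp add: nbhd0 sum_V)
  next
    case False
    then have "1 \<le> x" "x \<le> n" using x unfolding fan_V_def by auto
    then show ?thesis using win by (simp add: nb_sum)
  qed
next
  fix x assume x: "x \<in> fan_V n" and fx: "f x = -1"
  show "\<exists>y\<in>fan_V n. fan_E n x y \<and> f y = 2"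
  proof (cases "x = 0")
    case True
    then obtain y where "y \<in> {1..n}" "f y = 2" using m0 fx by auto
    then show ?thesis using True unfolding fan_E_def fan_V_def by (intro bexI[of _ y]) auto
  next
    case False
    then have i: "1 \<le> x" "x \<le> n" using x unfolding fan_V_def by auto
    then have "f 0 = 2 \<or> (2 \<le> x \<and> f (x-1) = 2) \<or> (x < n \<and> f (x+1) = 2)" using mi fx by auto
    then show ?thesis
    proof (elim disjE conjE)
      assume "f 0 = 2" then show ?thesis using i unfolding fan_E_def fan_V_def by (intro bexI[of _ 0]) auto
    next
      assume "2 \<le> x" "f (x-1) = 2" then show ?thesis using i unfolding fan_E_def fan_V_def by (intro bexI[of _ "x-1"]) auto
    next
      assume "x < n" "f (x+1) = 2" then show ?thesis using i unfolding fan_E_def fan_V_def by (intro bexI[of _ "x+1"]) auto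
    qed
  qed
qed

lemma SRDF_elim:
  assumes "is_SRDF (fan_V n) (fan_E n) f"
  shows "f 0 \<in> {-1,1,2}" "\<forall>i\<in>{1..n}. f i \<in> {-1,1,2}"
    "weight (fan_V n) f \<ge> 1"
    "weight (fan_V n) f = f 0 + (\<Sum>i=1..n. f i)"
    "\<forall>i\<in>{1..n}. f 0 + f i + (if 2 \<le> i then f (i-1) else 0) + (if i < n then f (i+1) else 0) \<ge> 1"
    "f 0 = -1 \<longrightarrow> (\<exists>y\<in>{1..n}. f y = 2)"
    "\<forall>i\<in>{1..n}. f i = -1 \<longrightarrow> (f 0 = 2 \<or> (2 \<le> i \<and> f (i-1) = 2) \<or> (i < n \<and> f (i+1) = 2))"
proof -
  note A = assms[unfolded is_SRDF_def]
  show "f 0 \<in> {-1,1,2}" using A unfolding fan_V_def by auto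
  show "\<forall>i\<in>{1..n}. f i \<in> {-1,1,2}" using A unfolding fan_V_def by auto
  have "0 \<in> fan_V n" unfolding fan_V_def by auto
  then show "weight (fan_V n) f \<ge> 1" using A nbhd0[of n] unfolding weight_def by auto
  show "weight (fan_V n) f = f 0 + (\<Sum>i=1..n. f i)" unfolding weight_def by (rule sum_V)
  show "\<forall>i\<in>{1..n}. f 0 + f i + (if 2 \<le> i then f (i-1) else 0) + (if i < n then f (i+1) else 0) \<ge> 1"
  proof
    fix i assume i: "i \<in> {1..n}"
    then have "i \<in> fan_V n" unfolding fan_V_def by auto
    then have "(\<Sum>y\<in>closed_nbhd (fan_V n) (fan_E n) i. f y) \<ge> 1" using A by blast
    then show "f 0 + f i + (if 2 \<le> i then f (i-1) else 0) + (if i < n then f (i+1) else 0) \<ge> 1"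
      using nb_sum[of i n f] i by simp
  qed
  show "f 0 = -1 \<longrightarrow> (\<exists>y\<in>{1..n}. f y = 2)"
  proof
    assume "f 0 = -1"
    moreover have "0 \<in> fan_V n" unfolding fan_V_def by auto
    ultimately obtain y where "y \<in> fan_V n" "fan_E n 0 y" "f y = 2" using A by blast
    then show "\<exists>y\<in>{1..n}. f y = 2" unfolding fan_V_def fan_E_def by auto
  qed
  show "\<forall>i\<in>{1..n}. f i = -1 \<longrightarrow> (f 0 = 2 \<or> (2 \<le> i \<and> f (i-1) = 2) \<or> (i < n \<and> f (i+1) = 2))"
  proof (intro ballI impI)
    fix i assume i: "i \<in> {1..n}" and fi: "f i = -1"
    moreover have "i \<in> fan_V n" using i unfolding fan_V_def by auto
    ultimately obtain y where y: "y \<in> fan_V n" "fan_E n i y" "f y = 2" using A by blast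
    then have "y = 0 \<or> (2 \<le> i \<and> y = i - 1) \<or> (i < n \<and> y = i+1)"
      using i unfolding fan_E_def fan_V_def by auto
    then show "f 0 = 2 \<or> (2 \<le> i \<and> f (i-1) = 2) \<or> (i < n \<and> f (i+1) = 2)" using y by auto
  qed
qed

lemma gamma_eq:
  assumes ex: "is_SRDF (fan_V n) (fan_E n) f" "weight (fan_V n) f = a"
    and lb: "\<And>g. is_SRDF (fan_V n) (fan_E n) g \<Longrightarrow> weight (fan_V n) g \<ge> a"
  shows "gamma_sR (fan_V n) (fan_E n) = a"
proof -
  let ?S = "{weight (fan_V n) f | f. is_SRDF (fan_V n) (fan_E n) f}"
  have "?S \<subseteq> {- int (card (fan_V n)) .. 2 * int (card (fan_V n))}"
  proof
    fix w assume "w \<in> ?S"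
    then obtain g where g: "is_SRDF (fan_V n) (fan_E n) g" "w = weight (fan_V n) g" by auto
    have r: "\<forall>x\<in>fan_V n. g x \<in> {-1,1,2}" using g(1) unfolding is_SRDF_def by auto
    have "(\<Sum>x\<in>fan_V n. (-1::int)) \<le> (\<Sum>x\<in>fan_V n. g x)" using r by (intro sum_mono) auto
    moreover have "(\<Sum>x\<in>fan_V n. g x) \<le> (\<Sum>x\<in>fan_V n. (2::int))" using r by (intro sum_mono) auto
    ultimately show "w \<in> {- int (card (fan_V n)) .. 2 * int (card (fan_V n))}"
      using g(2) unfolding weight_def by simp
  qed
  then have fin: "finite ?S" by (rule finite_subset) simp
  have "a \<in> ?S" using ex by auto
  moreover have "\<forall>w\<in>?S. a \<le> w" using lb by auto
  ultimately show ?thesis unfolding gamma_sR_def using fin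
    by (intro Min_eqI) auto
qed

lemma lb1: "is_SRDF (fan_V n) (fan_E n) g \<Longrightarrow> weight (fan_V n) g \<ge> 1"
  using SRDF_elim(3) by blast

lemma lb2: assumes "is_SRDF (fan_V 2) (fan_E 2) g" shows "weight (fan_V 2) g \<ge> 2"
proof -
  note E = SRDF_elim[OF assms]
  have eq: "{1..2::nat} = {1,2}" by auto
  have v: "g 0 \<in> {-1,1,2}" "g 1 \<in> {-1,1,2}" "g 2 \<in> {-1,1,2}" using E(1,2) unfolding eq by auto
  have m: "g 0 = -1 \<longrightarrow> g 1 = 2 \<or> g 2 = 2" using E(6) unfolding eq by auto
  have m2: "g 1 = -1 \<longrightarrow> g 0 = 2 \<or> g 2 = 2" using bspec[OF E(7), of 1] by (simp add: eval_nat_numeral)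
  have m3: "g 2 = -1 \<longrightarrow> g 0 = 2 \<or> g 1 = 2" using bspec[OF E(7), of 2] by (simp add: eval_nat_numeral)
  have w: "weight (fan_V 2) g = g 0 + g 1 + g 2" using E(4) unfolding eq by simp
  show ?thesis using v m m2 m3 w E(3) by auto
qed

lemma lb4: assumes "is_SRDF (fan_V 4) (fan_E 4) g" shows "weight (fan_V 4) g \<ge> 2"
proof (rule ccontr)
  assume c: "\<not> ?thesis"
  note E = SRDF_elim[OF assms]
  have eq: "{1..4::nat} = {1,2,3,4}" by auto
  have v: "g 0 \<in> {-1,1,2}" "g 1 \<in> {-1,1,2}" "g 2 \<in> {-1,1,2}" "g 3 \<in> {-1,1,2}" "g 4 \<in> {-1,1,2}"
    using E(1,2) unfolding eq by auto
  have w: "weight (fan_V 4) g = g 0 + g 1 + g 2 + g 3 + g 4" using E(4) unfolding eq by simp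
  have W: "g 0 + g 1 + g 2 + g 3 + g 4 = 1" using w c E(3) by simp
  have win: "g 0 + g 1 + g 2 \<ge> 1" "g 0 + g 2 + g 1 + g 3 \<ge> 1" "g 0 + g 3 + g 2 + g 4 \<ge> 1" "g 0 + g 4 + g 3 \<ge> 1"
    using bspec[OF E(5), of 1] bspec[OF E(5), of 2] bspec[OF E(5), of 3] bspec[OF E(5), of 4]
    by (simp_all add: algebra_simps eval_nat_numeral)
  have m: "g 1 = -1 \<longrightarrow> g 0 = 2 \<or> g 2 = 2" "g 4 = -1 \<longrightarrow> g 0 = 2 \<or> g 3 = 2"
    using bspec[OF E(7), of 1] bspec[OF E(7), of 4] by (simp_all add: eval_nat_numeral)
  have g4: "g 4 = -1" using v(5) W win(2) by auto
  have g1: "g 1 = -1" using v(2) W win(3) by auto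
  have s: "g 0 + g 2 + g 3 = 3" using W g1 g4 by simp
  have a: "g 0 + g 2 \<ge> 2" using win(1) g1 by simp
  have b: "g 0 + g 3 \<ge> 2" using win(4) g4 by simp
  have c1: "g 0 = 2 \<or> g 2 = 2" using m(1) g1 by simp
  have c2: "g 0 = 2 \<or> g 3 = 2" using m(2) g4 by simp
  from v(1) show False
  proof (elim insertE)
    assume "g 0 = -1" then show False using a v(3) by auto
  next
    assume h: "g 0 = 1"
    then have "g 2 = 2" "g 3 = 2" using c1 c2 by auto
    then show False using s h by simp
  next
    assume h: "g 0 = 2"
    then show False using s a b v(3,4) by auto
  qed simp
qed

lemma sum_alt: "(\<Sum>i=1..n. (-1::int)^i) = (if even n then 0 else -1)"
  by (induction n) (auto simp: sum.cl_ivl_Suc)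

lemma alt_val: "(-1::int)^i \<in> {-1,1}"
  by (cases "even i") auto

lemma alt_win: assumes "1 \<le> i"
  shows "2 + (-1::int)^i + (if 2\<le>i then (-1)^(i-1) else 0) + (if i<n then (-1)^(i+1) else 0) \<ge> 1"
proof -
  obtain j where j: "i = Suc j" using assms by (cases i) auto
  have a: "(-1::int)^i = -((-1)^(i-1))" using j by simp
  have b: "(-1::int)^(i+1) = -((-1)^i)" by simp
  have c: "(-1::int)^i = 1 \<or> (-1::int)^i = -1" using alt_val[of i] by auto
  show ?thesis using a b c by (cases "2 \<le> i"; cases "i < n") auto
qed

lemma up2: "\<exists>f. is_SRDF (fan_V 2) (fan_E 2) f \<and> weight (fan_V 2) f = 2"
proof -
  define f :: "nat \<Rightarrow> int" where "f i = (if i = 0 then 2 else if i = 1 then 1 else if i = 2 then -1 else 0)" for i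
  have eq: "{1..2::nat} = {1,2}" by auto
  have s: "(\<Sum>i=1..2. f i) = 0" unfolding eq by (simp add: f_def)
  have "is_SRDF (fan_V 2) (fan_E 2) f"
    by (rule SRDF_intro) (use s in \<open>auto simp: f_def eq\<close>)
  moreover have "weight (fan_V 2) f = 2" unfolding weight_def sum_V using s by (simp add: f_def)
  ultimately show ?thesis by blast
qed

lemma up4: "\<exists>f. is_SRDF (fan_V 4) (fan_E 4) f \<and> weight (fan_V 4) f = 2"
proof -
  define f :: "nat \<Rightarrow> int" where "f i = (if i = 0 then 2 else if i = 1 \<or> i = 4 then -1 else if i = 2 \<or> i = 3 then 1 else 0)" for i
  have eq: "{1..4::nat} = {1,2,3,4}" by auto
  have s: "(\<Sum>i=1..4. f i) = 0" unfolding eq by (simp add: f_def)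
  have "is_SRDF (fan_V 4) (fan_E 4) f"
    by (rule SRDF_intro) (use s in \<open>auto simp: f_def eq\<close>)
  moreover have "weight (fan_V 4) f = 2" unfolding weight_def sum_V using s by (simp add: f_def)
  ultimately show ?thesis by blast
qed

lemma up6: "\<exists>f. is_SRDF (fan_V 6) (fan_E 6) f \<and> weight (fan_V 6) f = 1"
proof -
  define f :: "nat \<Rightarrow> int" where "f i = (if i = 0 then 1 else if i = 2 \<or> i = 5 then 2 else if i \<le> 6 then -1 else 0)" for i
  have eq: "{1..6::nat} = {1,2,3,4,5,6}" by auto
  have s: "(\<Sum>i=1..6. f i) = 0" unfolding eq by (simp add: f_def)
  have "is_SRDF (fan_V 6) (fan_E 6) f"
    by (rule SRDF_intro) (use s in \<open>auto simp: f_def eq\<close>)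
  moreover have "weight (fan_V 6) f = 1" unfolding weight_def sum_V using s by (simp add: f_def)
  ultimately show ?thesis by blast
qed

lemma upodd: assumes "odd n" shows "\<exists>f. is_SRDF (fan_V n) (fan_E n) f \<and> weight (fan_V n) f = 1"
proof -
  define f :: "nat \<Rightarrow> int" where "f i = (if i = 0 then 2 else if i \<le> n then (-1)^i else 0)" for i
  have s: "(\<Sum>i=1..n. f i) = -1"
  proof -
    have "(\<Sum>i=1..n. f i) = (\<Sum>i=1..n. (-1::int)^i)" by (rule sum.cong) (auto simp: f_def)
    then show ?thesis using assms sum_alt[of n] by simp
  qed
  have "is_SRDF (fan_V n) (fan_E n) f"
  proof (rule SRDF_intro)
    show "\<forall>i\<in>{1..n}. f i \<in> {-1,1,2}" using alt_val by (auto simp: f_def)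
    show "\<forall>i\<in>{1..n}. f 0 + f i + (if 2 \<le> i then f (i-1) else 0) + (if i < n then f (i+1) else 0) \<ge> 1"
    proof
      fix i assume i: "i \<in> {1..n}"
      then have "f 0 + f i + (if 2 \<le> i then f (i-1) else 0) + (if i < n then f (i+1) else 0)
        = 2 + (-1::int)^i + (if 2\<le>i then (-1)^(i-1) else 0) + (if i<n then (-1)^(i+1) else 0)"
        by (auto simp: f_def)
      then show "f 0 + f i + (if 2 \<le> i then f (i-1) else 0) + (if i < n then f (i+1) else 0) \<ge> 1"
        using alt_win[of i n] i by simp
    qed
  qed (use s in \<open>auto simp: f_def\<close>)
  moreover have "weight (fan_V n) f = 1" unfolding weight_def sum_V using s by (simp add: f_def)
  ultimately show ?thesis by blast
qed

lemma upeven: assumes "even n" "n \<ge> 8" shows "\<exists>f. is_SRDF (fan_V n) (fan_E n) f \<and> weight (fan_V n) f = 1"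
proof -
  define h :: "nat \<Rightarrow> int" where "h i = (if i = 4 \<or> i = 6 then -1 else if i = 5 then 2 else (-1)^i)" for i
  define f :: "nat \<Rightarrow> int" where "f i = (if i = 0 then 2 else if i \<le> n then h i else 0)" for i
  define d :: "nat \<Rightarrow> int" where "d i = h i - (-1)^i" for i
  have s: "(\<Sum>i=1..n. f i) = -1"
  proof -
    have "(\<Sum>i=1..n. f i) = (\<Sum>i=1..n. (-1::int)^i + d i)" by (rule sum.cong) (auto simp: f_def d_def)
    also have "\<dots> = (\<Sum>i=1..n. (-1::int)^i) + (\<Sum>i=1..n. d i)" by (rule sum.distrib)
    also have "(\<Sum>i=1..n. d i) = (\<Sum>i\<in>{4,5,6}. d i)"
      by (rule sum.mono_neutral_right) (use assms in \<open>auto simp: d_def h_def\<close>)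
    also have "\<dots> = -1" by (simp add: d_def h_def)
    finally show ?thesis using assms sum_alt[of n] by simp
  qed
  have hv: "h i \<in> {-1,1,2}" for i using alt_val[of i] by (auto simp: h_def)
  have "is_SRDF (fan_V n) (fan_E n) f"
  proof (rule SRDF_intro)
    show "\<forall>i\<in>{1..n}. f i \<in> {-1,1,2}" using hv by (auto simp: f_def)
    show "\<forall>i\<in>{1..n}. f 0 + f i + (if 2 \<le> i then f (i-1) else 0) + (if i < n then f (i+1) else 0) \<ge> 1"
    proof
      fix i assume i: "i \<in> {1..n}"
      show "f 0 + f i + (if 2 \<le> i then f (i-1) else 0) + (if i < n then f (i+1) else 0) \<ge> 1"
      proof (cases "i \<in> {3,4,5,6,7}")
        case True
        then show ?thesis using assms i by (auto simp: f_def h_def)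
      next
        case False
        then have "f 0 + f i + (if 2 \<le> i then f (i-1) else 0) + (if i < n then f (i+1) else 0)
          = 2 + (-1::int)^i + (if 2\<le>i then (-1)^(i-1) else 0) + (if i<n then (-1)^(i+1) else 0)"
          using i by (auto simp: f_def h_def)
        then show ?thesis using alt_win[of i n] i by simp
      qed
    qed
  qed (use s in \<open>auto simp: f_def\<close>)
  moreover have "weight (fan_V n) f = 1" unfolding weight_def sum_V using s by (simp add: f_def)
  ultimately show ?thesis by blast
qed

theorem mainTheorem13:
  fixes n :: nat
  assumes "n \<ge> 1"
  shows "gamma_sR (fan_V n) (fan_E n) = (if n \<in> {2, 4} then 2 else 1)"
proof -
  have "n = 2 \<or> n = 4 \<or> n = 6 \<or> odd n \<or> (even n \<and> n \<ge> 8)" using assms by presburger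
  then consider "n = 2" | "n = 4" | "n = 6" | "odd n" | "even n \<and> n \<ge> 8" by blast
  then show ?thesis
  proof cases
    case 1
    obtain f where "is_SRDF (fan_V 2) (fan_E 2) f" "weight (fan_V 2) f = 2" using up2 by blast
    then show ?thesis using 1 lb2 by (simp add: gamma_eq)
  next
    case 2
    obtain f where "is_SRDF (fan_V 4) (fan_E 4) f" "weight (fan_V 4) f = 2" using up4 by blast
    then show ?thesis using 2 lb4 by (simp add: gamma_eq)
  next
    case 3
    obtain f where "is_SRDF (fan_V 6) (fan_E 6) f" "weight (fan_V 6) f = 1" using up6 by blast
    then show ?thesis using 3 lb1 by (simp add: gamma_eq)
  next
    case 4
    obtain f where "is_SRDF (fan_V n) (fan_E n) f" "weight (fan_V n) f = 1" using upodd 4 by blast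
    moreover have "n \<notin> {2,4}" using 4 by auto
    ultimately show ?thesis using lb1 by (simp add: gamma_eq)
  next
    case 5
    obtain f where "is_SRDF (fan_V n) (fan_E n) f" "weight (fan_V n) f = 1" using upeven 5 by blast
    moreover have "n \<notin> {2,4}" using 5 by auto
    ultimately show ?thesis using lb1 by (simp add: gamma_eq)
  qed
qed

end
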